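(* Let $A$ be the graph on $9$ vertices consisting of a central triangle with vertices $p_0,p_1,p_2$ together with three further triangles $\Delta_0,\Delta_1,\Delta_2$, where $\Delta_i$ shares exactly the vertex $p_i$ with the central triangle and the triangles $\Delta_0,\Delta_1,\Delta_2$ are pairwise vertex-disjoint. Let $G=A\,\square\,A$ be the cartesian product of $A$ with itself (the "2-hive"). Then there exists a set $S\subseteq V(G)$ that is a non-isolated perfect dominating set of $G$, i.e. every vertex of $G$ not in $S$ either has exactly one neighbour in $S$, or has exactly two neighbours in $S$ and these two neighbours are the end-vertices of an edge of $G$. Moreover, the connected components of the subgraph of $G$ induced by $S$ are: four copies of $K_2$ (single edges), one $4$-cycle $K_2\square K_2$, and one triangular prism $K_3\square K_2$.
   Context: A tersquare is the graph $K_3\square K_3$ (cartesian product of two triangles, vertex set $F_3\times F_3$ with $F_3=\{0,1,2\}$); its triangles are the six subgraphs obtained by fixing one coordinate. The paper's "2-hive" $[[\emptyset]]$ is the union of $16$ tersquares: a central tersquare, six "subcentral" tersquares each glued to the central one along exactly one of its six triangles, and nine "corner" tersquares, each sharing one triangle with a subcentral tersquare glued along an $x$-triangle, one triangle with a subcentral tersquare glued along a $y$-triangle, and exactly one vertex with the central tersquare. As a graph this union is exactly $A\square A$ as described in the claim (the $16$ tersquares being the products $T\times T'$ with $T,T'$ among the four triangles of $A$). Here $K_2$ is a single edge, and $\square$ denotes the cartesian product of graphs. *)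

theory Defs
  imports Main
begin

text \<open>A (simple, undirected) graph is given by a vertex set V and a symmetric,
irreflexive adjacency predicate E (only its restriction to V matters).\<close>

definition cart_prod_adj ::
  "('a \<Rightarrow> 'a \<Rightarrow> bool) \<Rightarrow> ('b \<Rightarrow> 'b \<Rightarrow> bool) \<Rightarrow> ('a \<times> 'b) \<Rightarrow> ('a \<times> 'b) \<Rightarrow> bool" where
  "cart_prod_adj E1 E2 x y \<longleftrightarrow>
     (fst x = fst y \<and> E2 (snd x) (snd y)) \<or> (snd x = snd y \<and> E1 (fst x) (fst y))"

definition K_V :: "nat \<Rightarrow> nat set" where "K_V n = {0..<n}"
definition K_adj :: "nat \<Rightarrow> nat \<Rightarrow> bool" where "K_adj u v \<longleftrightarrow> u \<noteq> v"

text \<open>The graph A on 9 vertices: central triangle {0,1,2}; triangle Delta_0 = {0,3,4},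
Delta_1 = {1,5,6}, Delta_2 = {2,7,8}.\<close>
definition A_V :: "nat set" where "A_V = {0..<9}"
definition A_triangles :: "nat set set" where
  "A_triangles = {{0,1,2}, {0,3,4}, {1,5,6}, {2,7,8}}"
definition A_adj :: "nat \<Rightarrow> nat \<Rightarrow> bool" where
  "A_adj u v \<longleftrightarrow> u \<noteq> v \<and> (\<exists>T\<in>A_triangles. u \<in> T \<and> v \<in> T)"

definition hive_V :: "(nat \<times> nat) set" where "hive_V = A_V \<times> A_V"
definition hive_adj :: "(nat \<times> nat) \<Rightarrow> (nat \<times> nat) \<Rightarrow> bool" where
  "hive_adj = cart_prod_adj A_adj A_adj"

definition nbrs_in :: "('a \<Rightarrow> 'a \<Rightarrow> bool) \<Rightarrow> 'a set \<Rightarrow> 'a \<Rightarrow> 'a set" where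
  "nbrs_in E S x = {y \<in> S. E x y}"

definition nonisolated_perfect_dominating ::
  "'a set \<Rightarrow> ('a \<Rightarrow> 'a \<Rightarrow> bool) \<Rightarrow> 'a set \<Rightarrow> bool" where
  "nonisolated_perfect_dominating V E S \<longleftrightarrow>
     S \<subseteq> V \<and>
     (\<forall>x\<in>S. \<exists>y\<in>S. E x y) \<and>
     (\<forall>x\<in>V - S. card (nbrs_in E S x) = 1 \<or>
        (card (nbrs_in E S x) = 2 \<and> (\<exists>a b. nbrs_in E S x = {a, b} \<and> E a b)))"

definition reach_in :: "('a \<Rightarrow> 'a \<Rightarrow> bool) \<Rightarrow> 'a set \<Rightarrow> 'a \<Rightarrow> 'a \<Rightarrow> bool" where
  "reach_in E S = (\<lambda>x y. x \<in> S \<and> y \<in> S \<and> E x y)\<^sup>*\<^sup>*"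

definition components_of :: "('a \<Rightarrow> 'a \<Rightarrow> bool) \<Rightarrow> 'a set \<Rightarrow> 'a set set" where
  "components_of E S = (\<lambda>x. {y \<in> S. reach_in E S x y}) ` S"

definition graph_iso :: "'a set \<Rightarrow> ('a \<Rightarrow> 'a \<Rightarrow> bool) \<Rightarrow> 'b set \<Rightarrow> ('b \<Rightarrow> 'b \<Rightarrow> bool) \<Rightarrow> bool" where
  "graph_iso V1 E1 V2 E2 \<longleftrightarrow>
     (\<exists>f. bij_betw f V1 V2 \<and> (\<forall>x\<in>V1. \<forall>y\<in>V1. E1 x y \<longleftrightarrow> E2 (f x) (f y)))"

end

theory Submission
  imports Defs
begin

lemma A_adj_iff: "A_adj u v \<longleftrightarrow> u \<noteq> v \<and>
  ((u \<in> {0,1,2} \<and> v \<in> {0,1,2}) \<or> (u \<in> {0,3,4} \<and> v \<in> {0,3,4}) \<or>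
   (u \<in> {1,5,6} \<and> v \<in> {1,5,6}) \<or> (u \<in> {2,7,8} \<and> v \<in> {2,7,8}))"
  unfolding A_adj_def A_triangles_def by auto

lemma hive_adj_iff: "hive_adj (a,b) (c,d) \<longleftrightarrow> (a = c \<and> A_adj b d) \<or> (b = d \<and> A_adj a c)"
  unfolding hive_adj_def cart_prod_adj_def by simp

lemma hive_sym: "hive_adj x y \<Longrightarrow> hive_adj y x"
  unfolding hive_adj_def cart_prod_adj_def A_adj_def by auto

lemma A_V_eq: "A_V = {0,1,2,3,4,5,6,7,8}"
  unfolding A_V_def by auto

lemma K2: "K_V 2 = {0,1}" unfolding K_V_def by auto
lemma K3: "K_V 3 = {0,1,2}" unfolding K_V_def by auto

lemma ball_times: "(\<forall>x\<in>A \<times> B. P x) \<longleftrightarrow> (\<forall>a\<in>A. \<forall>b\<in>B. P (a,b))"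
  by auto

lemma ball_ins: "(\<forall>x\<in>insert a B. P x) \<longleftrightarrow> P a \<and> (\<forall>x\<in>B. P x)"
  by auto

lemma ball_emp: "(\<forall>x\<in>{}. P x) \<longleftrightarrow> True"
  by auto

definition sfilt :: "('a \<Rightarrow> bool) \<Rightarrow> 'a set \<Rightarrow> 'a set" where
  "sfilt P A = {a \<in> A. P a}"

lemma nbrs_filter: "nbrs_in E S x = sfilt (E x) S"
  by (simp add: nbrs_in_def sfilt_def)

lemma sf_T: "P a \<Longrightarrow> sfilt P (insert a B) = insert a (sfilt P B)"
  by (auto simp: sfilt_def)

lemma sf_F: "\<not> P a \<Longrightarrow> sfilt P (insert a B) = sfilt P B"
  by (auto simp: sfilt_def)

lemma sf_E: "sfilt P {} = {}"
  by (auto simp: sfilt_def)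

lemma filter_insert_simp:
  "{y \<in> insert a B. P y} = (if P a then insert a {y \<in> B. P y} else {y \<in> B. P y})"
  by auto

lemma card2_help:
  assumes "card N = 1 \<or> (card N = 2 \<and> (\<forall>a\<in>N. \<forall>b\<in>N. a \<noteq> b \<longrightarrow> E a b))"
  shows "card N = 1 \<or> (card N = 2 \<and> (\<exists>a b. N = {a, b} \<and> E a b))"
  using assms by (auto simp: card_2_iff)

lemma reach_step1: "x \<in> S \<Longrightarrow> y \<in> S \<Longrightarrow> E x y \<Longrightarrow> reach_in E S x y"
  unfolding reach_in_def by (rule r_into_rtranclp) simp

lemma reach_step2: "reach_in E S x y \<Longrightarrow> y \<in> S \<Longrightarrow> z \<in> S \<Longrightarrow> E y z \<Longrightarrow> reach_in E S x z"
  unfolding reach_in_def by (rule rtranclp.rtrancl_into_rtrancl) auto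

lemma reach_refl: "reach_in E S x x"
  unfolding reach_in_def by simp

lemma reach_closed:
  assumes "reach_in E S x y" "x \<in> C" "\<forall>u\<in>C. \<forall>v\<in>S. E u v \<longrightarrow> v \<in> C"
  shows "y \<in> C"
  using assms(1,2) unfolding reach_in_def
  by (induction rule: rtranclp_induct) (use assms(3) in auto)

lemma reach_sym:
  assumes "reach_in E S x y" "\<And>u v. E u v \<Longrightarrow> E v u"
  shows "reach_in E S y x"
  using assms(1) unfolding reach_in_def
proof (induction rule: rtranclp_induct)
  case base then show ?case by simp
next
  case (step y z)
  then have "(\<lambda>x y. x \<in> S \<and> y \<in> S \<and> E x y) z y" using assms(2) by auto
  then show ?case using step(3) by (rule converse_rtranclp_into_rtranclp)
qed

lemma reach_trans: "reach_in E S x y \<Longrightarrow> reach_in E S y z \<Longrightarrow> reach_in E S x z"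
  unfolding reach_in_def by (rule rtranclp_trans)

lemma comp_lemma:
  assumes "h \<in> C" "C \<subseteq> S" "\<forall>u\<in>C. \<forall>v\<in>S. E u v \<longrightarrow> v \<in> C"
    "\<forall>y\<in>C. reach_in E S h y" "\<And>u v. E u v \<Longrightarrow> E v u" "x \<in> C"
  shows "{y \<in> S. reach_in E S x y} = C"
proof
  show "{y \<in> S. reach_in E S x y} \<subseteq> C" using reach_closed[OF _ assms(6,3)] by auto
  show "C \<subseteq> {y \<in> S. reach_in E S x y}"
  proof
    fix y assume y: "y \<in> C"
    have "reach_in E S h x" using assms(4,6) by (rule bspec)
    then have "reach_in E S x h" by (rule reach_sym) (rule assms(5), assumption)
    moreover have "reach_in E S h y" using assms(4) y by (rule bspec)
    ultimately have "reach_in E S x y" by (rule reach_trans)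
    then show "y \<in> {y \<in> S. reach_in E S x y}" using y assms(2) by auto
  qed
qed

definition S0 :: "(nat \<times> nat) set" where
  "S0 = {(0,7),(0,8),(0,3),(0,4),(1,3),(1,4),(2,3),(2,4),(5,2),(6,2),(1,5),(1,6),(2,5),(2,6),
         (3,1),(4,1),(7,2),(8,2)}"

definition D1 :: "(nat \<times> nat) set" where "D1 = {(0,7),(0,8)}"
definition D2 :: "(nat \<times> nat) set" where "D2 = {(5,2),(6,2)}"
definition D3 :: "(nat \<times> nat) set" where "D3 = {(3,1),(4,1)}"
definition D4 :: "(nat \<times> nat) set" where "D4 = {(7,2),(8,2)}"
definition D5 :: "(nat \<times> nat) set" where "D5 = {(1,5),(1,6),(2,5),(2,6)}"
definition D6 :: "(nat \<times> nat) set" where "D6 = {(0,3),(0,4),(1,3),(1,4),(2,3),(2,4)}"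

lemma S0_union: "S0 = D1 \<union> D2 \<union> D3 \<union> D4 \<union> D5 \<union> D6"
  unfolding S0_def D1_def D2_def D3_def D4_def D5_def D6_def by auto

definition good :: "nat \<times> nat \<Rightarrow> bool" where
  "good x \<longleftrightarrow> card (nbrs_in hive_adj S0 x) = 1 \<or>
        (card (nbrs_in hive_adj S0 x) = 2 \<and> (\<forall>a\<in>nbrs_in hive_adj S0 x. \<forall>b\<in>nbrs_in hive_adj S0 x. a \<noteq> b \<longrightarrow> hive_adj a b))"

lemma nb_0_0: "nbrs_in hive_adj S0 (0,0) = {(0,3),(0,4)}"
  unfolding nbrs_filter S0_def by (simp add: sf_T sf_F sf_E hive_adj_iff A_adj_iff)
lemma g_0_0: "(0,0) \<notin> S0 \<longrightarrow> good (0,0)"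
  unfolding good_def nb_0_0 by (simp add: hive_adj_iff A_adj_iff)
lemma nb_0_1: "nbrs_in hive_adj S0 (0,1) = {(3,1),(4,1)}"
  unfolding nbrs_filter S0_def by (simp add: sf_T sf_F sf_E hive_adj_iff A_adj_iff)
lemma g_0_1: "(0,1) \<notin> S0 \<longrightarrow> good (0,1)"
  unfolding good_def nb_0_1 by (simp add: hive_adj_iff A_adj_iff)
lemma nb_0_2: "nbrs_in hive_adj S0 (0,2) = {(0,7),(0,8)}"
  unfolding nbrs_filter S0_def by (simp add: sf_T sf_F sf_E hive_adj_iff A_adj_iff)
lemma g_0_2: "(0,2) \<notin> S0 \<longrightarrow> good (0,2)"
  unfolding good_def nb_0_2 by (simp add: hive_adj_iff A_adj_iff)
lemma g_0_3: "(0,3) \<notin> S0 \<longrightarrow> good (0,3)" by (simp add: S0_def)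
lemma g_0_4: "(0,4) \<notin> S0 \<longrightarrow> good (0,4)" by (simp add: S0_def)
lemma nb_0_5: "nbrs_in hive_adj S0 (0,5) = {(1,5),(2,5)}"
  unfolding nbrs_filter S0_def by (simp add: sf_T sf_F sf_E hive_adj_iff A_adj_iff)
lemma g_0_5: "(0,5) \<notin> S0 \<longrightarrow> good (0,5)"
  unfolding good_def nb_0_5 by (simp add: hive_adj_iff A_adj_iff)
lemma nb_0_6: "nbrs_in hive_adj S0 (0,6) = {(1,6),(2,6)}"
  unfolding nbrs_filter S0_def by (simp add: sf_T sf_F sf_E hive_adj_iff A_adj_iff)
lemma g_0_6: "(0,6) \<notin> S0 \<longrightarrow> good (0,6)"
  unfolding good_def nb_0_6 by (simp add: hive_adj_iff A_adj_iff)
lemma g_0_7: "(0,7) \<notin> S0 \<longrightarrow> good (0,7)" by (simp add: S0_def)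
lemma g_0_8: "(0,8) \<notin> S0 \<longrightarrow> good (0,8)" by (simp add: S0_def)
lemma nb_1_0: "nbrs_in hive_adj S0 (1,0) = {(1,3),(1,4)}"
  unfolding nbrs_filter S0_def by (simp add: sf_T sf_F sf_E hive_adj_iff A_adj_iff)
lemma g_1_0: "(1,0) \<notin> S0 \<longrightarrow> good (1,0)"
  unfolding good_def nb_1_0 by (simp add: hive_adj_iff A_adj_iff)
lemma nb_1_1: "nbrs_in hive_adj S0 (1,1) = {(1,5),(1,6)}"
  unfolding nbrs_filter S0_def by (simp add: sf_T sf_F sf_E hive_adj_iff A_adj_iff)
lemma g_1_1: "(1,1) \<notin> S0 \<longrightarrow> good (1,1)"
  unfolding good_def nb_1_1 by (simp add: hive_adj_iff A_adj_iff)
lemma nb_1_2: "nbrs_in hive_adj S0 (1,2) = {(5,2),(6,2)}"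
  unfolding nbrs_filter S0_def by (simp add: sf_T sf_F sf_E hive_adj_iff A_adj_iff)
lemma g_1_2: "(1,2) \<notin> S0 \<longrightarrow> good (1,2)"
  unfolding good_def nb_1_2 by (simp add: hive_adj_iff A_adj_iff)
lemma g_1_3: "(1,3) \<notin> S0 \<longrightarrow> good (1,3)" by (simp add: S0_def)
lemma g_1_4: "(1,4) \<notin> S0 \<longrightarrow> good (1,4)" by (simp add: S0_def)
lemma g_1_5: "(1,5) \<notin> S0 \<longrightarrow> good (1,5)" by (simp add: S0_def)
lemma g_1_6: "(1,6) \<notin> S0 \<longrightarrow> good (1,6)" by (simp add: S0_def)
lemma nb_1_7: "nbrs_in hive_adj S0 (1,7) = {(0,7)}"
  unfolding nbrs_filter S0_def by (simp add: sf_T sf_F sf_E hive_adj_iff A_adj_iff)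
lemma g_1_7: "(1,7) \<notin> S0 \<longrightarrow> good (1,7)"
  unfolding good_def nb_1_7 by (simp add: hive_adj_iff A_adj_iff)
lemma nb_1_8: "nbrs_in hive_adj S0 (1,8) = {(0,8)}"
  unfolding nbrs_filter S0_def by (simp add: sf_T sf_F sf_E hive_adj_iff A_adj_iff)
lemma g_1_8: "(1,8) \<notin> S0 \<longrightarrow> good (1,8)"
  unfolding good_def nb_1_8 by (simp add: hive_adj_iff A_adj_iff)
lemma nb_2_0: "nbrs_in hive_adj S0 (2,0) = {(2,3),(2,4)}"
  unfolding nbrs_filter S0_def by (simp add: sf_T sf_F sf_E hive_adj_iff A_adj_iff)
lemma g_2_0: "(2,0) \<notin> S0 \<longrightarrow> good (2,0)"
  unfolding good_def nb_2_0 by (simp add: hive_adj_iff A_adj_iff)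
lemma nb_2_1: "nbrs_in hive_adj S0 (2,1) = {(2,5),(2,6)}"
  unfolding nbrs_filter S0_def by (simp add: sf_T sf_F sf_E hive_adj_iff A_adj_iff)
lemma g_2_1: "(2,1) \<notin> S0 \<longrightarrow> good (2,1)"
  unfolding good_def nb_2_1 by (simp add: hive_adj_iff A_adj_iff)
lemma nb_2_2: "nbrs_in hive_adj S0 (2,2) = {(7,2),(8,2)}"
  unfolding nbrs_filter S0_def by (simp add: sf_T sf_F sf_E hive_adj_iff A_adj_iff)
lemma g_2_2: "(2,2) \<notin> S0 \<longrightarrow> good (2,2)"
  unfolding good_def nb_2_2 by (simp add: hive_adj_iff A_adj_iff)
lemma g_2_3: "(2,3) \<notin> S0 \<longrightarrow> good (2,3)" by (simp add: S0_def)
lemma g_2_4: "(2,4) \<notin> S0 \<longrightarrow> good (2,4)" by (simp add: S0_def)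
lemma g_2_5: "(2,5) \<notin> S0 \<longrightarrow> good (2,5)" by (simp add: S0_def)
lemma g_2_6: "(2,6) \<notin> S0 \<longrightarrow> good (2,6)" by (simp add: S0_def)
lemma nb_2_7: "nbrs_in hive_adj S0 (2,7) = {(0,7)}"
  unfolding nbrs_filter S0_def by (simp add: sf_T sf_F sf_E hive_adj_iff A_adj_iff)
lemma g_2_7: "(2,7) \<notin> S0 \<longrightarrow> good (2,7)"
  unfolding good_def nb_2_7 by (simp add: hive_adj_iff A_adj_iff)
lemma nb_2_8: "nbrs_in hive_adj S0 (2,8) = {(0,8)}"
  unfolding nbrs_filter S0_def by (simp add: sf_T sf_F sf_E hive_adj_iff A_adj_iff)
lemma g_2_8: "(2,8) \<notin> S0 \<longrightarrow> good (2,8)"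
  unfolding good_def nb_2_8 by (simp add: hive_adj_iff A_adj_iff)
lemma nb_3_0: "nbrs_in hive_adj S0 (3,0) = {(3,1)}"
  unfolding nbrs_filter S0_def by (simp add: sf_T sf_F sf_E hive_adj_iff A_adj_iff)
lemma g_3_0: "(3,0) \<notin> S0 \<longrightarrow> good (3,0)"
  unfolding good_def nb_3_0 by (simp add: hive_adj_iff A_adj_iff)
lemma g_3_1: "(3,1) \<notin> S0 \<longrightarrow> good (3,1)" by (simp add: S0_def)
lemma nb_3_2: "nbrs_in hive_adj S0 (3,2) = {(3,1)}"
  unfolding nbrs_filter S0_def by (simp add: sf_T sf_F sf_E hive_adj_iff A_adj_iff)
lemma g_3_2: "(3,2) \<notin> S0 \<longrightarrow> good (3,2)"
  unfolding good_def nb_3_2 by (simp add: hive_adj_iff A_adj_iff)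
lemma nb_3_3: "nbrs_in hive_adj S0 (3,3) = {(0,3)}"
  unfolding nbrs_filter S0_def by (simp add: sf_T sf_F sf_E hive_adj_iff A_adj_iff)
lemma g_3_3: "(3,3) \<notin> S0 \<longrightarrow> good (3,3)"
  unfolding good_def nb_3_3 by (simp add: hive_adj_iff A_adj_iff)
lemma nb_3_4: "nbrs_in hive_adj S0 (3,4) = {(0,4)}"
  unfolding nbrs_filter S0_def by (simp add: sf_T sf_F sf_E hive_adj_iff A_adj_iff)
lemma g_3_4: "(3,4) \<notin> S0 \<longrightarrow> good (3,4)"
  unfolding good_def nb_3_4 by (simp add: hive_adj_iff A_adj_iff)
lemma nb_3_5: "nbrs_in hive_adj S0 (3,5) = {(3,1)}"
  unfolding nbrs_filter S0_def by (simp add: sf_T sf_F sf_E hive_adj_iff A_adj_iff)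
lemma g_3_5: "(3,5) \<notin> S0 \<longrightarrow> good (3,5)"
  unfolding good_def nb_3_5 by (simp add: hive_adj_iff A_adj_iff)
lemma nb_3_6: "nbrs_in hive_adj S0 (3,6) = {(3,1)}"
  unfolding nbrs_filter S0_def by (simp add: sf_T sf_F sf_E hive_adj_iff A_adj_iff)
lemma g_3_6: "(3,6) \<notin> S0 \<longrightarrow> good (3,6)"
  unfolding good_def nb_3_6 by (simp add: hive_adj_iff A_adj_iff)
lemma nb_3_7: "nbrs_in hive_adj S0 (3,7) = {(0,7)}"
  unfolding nbrs_filter S0_def by (simp add: sf_T sf_F sf_E hive_adj_iff A_adj_iff)
lemma g_3_7: "(3,7) \<notin> S0 \<longrightarrow> good (3,7)"
  unfolding good_def nb_3_7 by (simp add: hive_adj_iff A_adj_iff)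
lemma nb_3_8: "nbrs_in hive_adj S0 (3,8) = {(0,8)}"
  unfolding nbrs_filter S0_def by (simp add: sf_T sf_F sf_E hive_adj_iff A_adj_iff)
lemma g_3_8: "(3,8) \<notin> S0 \<longrightarrow> good (3,8)"
  unfolding good_def nb_3_8 by (simp add: hive_adj_iff A_adj_iff)
lemma nb_4_0: "nbrs_in hive_adj S0 (4,0) = {(4,1)}"
  unfolding nbrs_filter S0_def by (simp add: sf_T sf_F sf_E hive_adj_iff A_adj_iff)
lemma g_4_0: "(4,0) \<notin> S0 \<longrightarrow> good (4,0)"
  unfolding good_def nb_4_0 by (simp add: hive_adj_iff A_adj_iff)
lemma g_4_1: "(4,1) \<notin> S0 \<longrightarrow> good (4,1)" by (simp add: S0_def)
lemma nb_4_2: "nbrs_in hive_adj S0 (4,2) = {(4,1)}"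
  unfolding nbrs_filter S0_def by (simp add: sf_T sf_F sf_E hive_adj_iff A_adj_iff)
lemma g_4_2: "(4,2) \<notin> S0 \<longrightarrow> good (4,2)"
  unfolding good_def nb_4_2 by (simp add: hive_adj_iff A_adj_iff)
lemma nb_4_3: "nbrs_in hive_adj S0 (4,3) = {(0,3)}"
  unfolding nbrs_filter S0_def by (simp add: sf_T sf_F sf_E hive_adj_iff A_adj_iff)
lemma g_4_3: "(4,3) \<notin> S0 \<longrightarrow> good (4,3)"
  unfolding good_def nb_4_3 by (simp add: hive_adj_iff A_adj_iff)
lemma nb_4_4: "nbrs_in hive_adj S0 (4,4) = {(0,4)}"
  unfolding nbrs_filter S0_def by (simp add: sf_T sf_F sf_E hive_adj_iff A_adj_iff)
lemma g_4_4: "(4,4) \<notin> S0 \<longrightarrow> good (4,4)"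
  unfolding good_def nb_4_4 by (simp add: hive_adj_iff A_adj_iff)
lemma nb_4_5: "nbrs_in hive_adj S0 (4,5) = {(4,1)}"
  unfolding nbrs_filter S0_def by (simp add: sf_T sf_F sf_E hive_adj_iff A_adj_iff)
lemma g_4_5: "(4,5) \<notin> S0 \<longrightarrow> good (4,5)"
  unfolding good_def nb_4_5 by (simp add: hive_adj_iff A_adj_iff)
lemma nb_4_6: "nbrs_in hive_adj S0 (4,6) = {(4,1)}"
  unfolding nbrs_filter S0_def by (simp add: sf_T sf_F sf_E hive_adj_iff A_adj_iff)
lemma g_4_6: "(4,6) \<notin> S0 \<longrightarrow> good (4,6)"
  unfolding good_def nb_4_6 by (simp add: hive_adj_iff A_adj_iff)
lemma nb_4_7: "nbrs_in hive_adj S0 (4,7) = {(0,7)}"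
  unfolding nbrs_filter S0_def by (simp add: sf_T sf_F sf_E hive_adj_iff A_adj_iff)
lemma g_4_7: "(4,7) \<notin> S0 \<longrightarrow> good (4,7)"
  unfolding good_def nb_4_7 by (simp add: hive_adj_iff A_adj_iff)
lemma nb_4_8: "nbrs_in hive_adj S0 (4,8) = {(0,8)}"
  unfolding nbrs_filter S0_def by (simp add: sf_T sf_F sf_E hive_adj_iff A_adj_iff)
lemma g_4_8: "(4,8) \<notin> S0 \<longrightarrow> good (4,8)"
  unfolding good_def nb_4_8 by (simp add: hive_adj_iff A_adj_iff)
lemma nb_5_0: "nbrs_in hive_adj S0 (5,0) = {(5,2)}"
  unfolding nbrs_filter S0_def by (simp add: sf_T sf_F sf_E hive_adj_iff A_adj_iff)
lemma g_5_0: "(5,0) \<notin> S0 \<longrightarrow> good (5,0)"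
  unfolding good_def nb_5_0 by (simp add: hive_adj_iff A_adj_iff)
lemma nb_5_1: "nbrs_in hive_adj S0 (5,1) = {(5,2)}"
  unfolding nbrs_filter S0_def by (simp add: sf_T sf_F sf_E hive_adj_iff A_adj_iff)
lemma g_5_1: "(5,1) \<notin> S0 \<longrightarrow> good (5,1)"
  unfolding good_def nb_5_1 by (simp add: hive_adj_iff A_adj_iff)
lemma g_5_2: "(5,2) \<notin> S0 \<longrightarrow> good (5,2)" by (simp add: S0_def)
lemma nb_5_3: "nbrs_in hive_adj S0 (5,3) = {(1,3)}"
  unfolding nbrs_filter S0_def by (simp add: sf_T sf_F sf_E hive_adj_iff A_adj_iff)
lemma g_5_3: "(5,3) \<notin> S0 \<longrightarrow> good (5,3)"
  unfolding good_def nb_5_3 by (simp add: hive_adj_iff A_adj_iff)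
lemma nb_5_4: "nbrs_in hive_adj S0 (5,4) = {(1,4)}"
  unfolding nbrs_filter S0_def by (simp add: sf_T sf_F sf_E hive_adj_iff A_adj_iff)
lemma g_5_4: "(5,4) \<notin> S0 \<longrightarrow> good (5,4)"
  unfolding good_def nb_5_4 by (simp add: hive_adj_iff A_adj_iff)
lemma nb_5_5: "nbrs_in hive_adj S0 (5,5) = {(1,5)}"
  unfolding nbrs_filter S0_def by (simp add: sf_T sf_F sf_E hive_adj_iff A_adj_iff)
lemma g_5_5: "(5,5) \<notin> S0 \<longrightarrow> good (5,5)"
  unfolding good_def nb_5_5 by (simp add: hive_adj_iff A_adj_iff)
lemma nb_5_6: "nbrs_in hive_adj S0 (5,6) = {(1,6)}"
  unfolding nbrs_filter S0_def by (simp add: sf_T sf_F sf_E hive_adj_iff A_adj_iff)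
lemma g_5_6: "(5,6) \<notin> S0 \<longrightarrow> good (5,6)"
  unfolding good_def nb_5_6 by (simp add: hive_adj_iff A_adj_iff)
lemma nb_5_7: "nbrs_in hive_adj S0 (5,7) = {(5,2)}"
  unfolding nbrs_filter S0_def by (simp add: sf_T sf_F sf_E hive_adj_iff A_adj_iff)
lemma g_5_7: "(5,7) \<notin> S0 \<longrightarrow> good (5,7)"
  unfolding good_def nb_5_7 by (simp add: hive_adj_iff A_adj_iff)
lemma nb_5_8: "nbrs_in hive_adj S0 (5,8) = {(5,2)}"
  unfolding nbrs_filter S0_def by (simp add: sf_T sf_F sf_E hive_adj_iff A_adj_iff)
lemma g_5_8: "(5,8) \<notin> S0 \<longrightarrow> good (5,8)"
  unfolding good_def nb_5_8 by (simp add: hive_adj_iff A_adj_iff)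
lemma nb_6_0: "nbrs_in hive_adj S0 (6,0) = {(6,2)}"
  unfolding nbrs_filter S0_def by (simp add: sf_T sf_F sf_E hive_adj_iff A_adj_iff)
lemma g_6_0: "(6,0) \<notin> S0 \<longrightarrow> good (6,0)"
  unfolding good_def nb_6_0 by (simp add: hive_adj_iff A_adj_iff)
lemma nb_6_1: "nbrs_in hive_adj S0 (6,1) = {(6,2)}"
  unfolding nbrs_filter S0_def by (simp add: sf_T sf_F sf_E hive_adj_iff A_adj_iff)
lemma g_6_1: "(6,1) \<notin> S0 \<longrightarrow> good (6,1)"
  unfolding good_def nb_6_1 by (simp add: hive_adj_iff A_adj_iff)
lemma g_6_2: "(6,2) \<notin> S0 \<longrightarrow> good (6,2)" by (simp add: S0_def)
lemma nb_6_3: "nbrs_in hive_adj S0 (6,3) = {(1,3)}"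
  unfolding nbrs_filter S0_def by (simp add: sf_T sf_F sf_E hive_adj_iff A_adj_iff)
lemma g_6_3: "(6,3) \<notin> S0 \<longrightarrow> good (6,3)"
  unfolding good_def nb_6_3 by (simp add: hive_adj_iff A_adj_iff)
lemma nb_6_4: "nbrs_in hive_adj S0 (6,4) = {(1,4)}"
  unfolding nbrs_filter S0_def by (simp add: sf_T sf_F sf_E hive_adj_iff A_adj_iff)
lemma g_6_4: "(6,4) \<notin> S0 \<longrightarrow> good (6,4)"
  unfolding good_def nb_6_4 by (simp add: hive_adj_iff A_adj_iff)
lemma nb_6_5: "nbrs_in hive_adj S0 (6,5) = {(1,5)}"
  unfolding nbrs_filter S0_def by (simp add: sf_T sf_F sf_E hive_adj_iff A_adj_iff)
lemma g_6_5: "(6,5) \<notin> S0 \<longrightarrow> good (6,5)"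
  unfolding good_def nb_6_5 by (simp add: hive_adj_iff A_adj_iff)
lemma nb_6_6: "nbrs_in hive_adj S0 (6,6) = {(1,6)}"
  unfolding nbrs_filter S0_def by (simp add: sf_T sf_F sf_E hive_adj_iff A_adj_iff)
lemma g_6_6: "(6,6) \<notin> S0 \<longrightarrow> good (6,6)"
  unfolding good_def nb_6_6 by (simp add: hive_adj_iff A_adj_iff)
lemma nb_6_7: "nbrs_in hive_adj S0 (6,7) = {(6,2)}"
  unfolding nbrs_filter S0_def by (simp add: sf_T sf_F sf_E hive_adj_iff A_adj_iff)
lemma g_6_7: "(6,7) \<notin> S0 \<longrightarrow> good (6,7)"
  unfolding good_def nb_6_7 by (simp add: hive_adj_iff A_adj_iff)
lemma nb_6_8: "nbrs_in hive_adj S0 (6,8) = {(6,2)}"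
  unfolding nbrs_filter S0_def by (simp add: sf_T sf_F sf_E hive_adj_iff A_adj_iff)
lemma g_6_8: "(6,8) \<notin> S0 \<longrightarrow> good (6,8)"
  unfolding good_def nb_6_8 by (simp add: hive_adj_iff A_adj_iff)
lemma nb_7_0: "nbrs_in hive_adj S0 (7,0) = {(7,2)}"
  unfolding nbrs_filter S0_def by (simp add: sf_T sf_F sf_E hive_adj_iff A_adj_iff)
lemma g_7_0: "(7,0) \<notin> S0 \<longrightarrow> good (7,0)"
  unfolding good_def nb_7_0 by (simp add: hive_adj_iff A_adj_iff)
lemma nb_7_1: "nbrs_in hive_adj S0 (7,1) = {(7,2)}"
  unfolding nbrs_filter S0_def by (simp add: sf_T sf_F sf_E hive_adj_iff A_adj_iff)
lemma g_7_1: "(7,1) \<notin> S0 \<longrightarrow> good (7,1)"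
  unfolding good_def nb_7_1 by (simp add: hive_adj_iff A_adj_iff)
lemma g_7_2: "(7,2) \<notin> S0 \<longrightarrow> good (7,2)" by (simp add: S0_def)
lemma nb_7_3: "nbrs_in hive_adj S0 (7,3) = {(2,3)}"
  unfolding nbrs_filter S0_def by (simp add: sf_T sf_F sf_E hive_adj_iff A_adj_iff)
lemma g_7_3: "(7,3) \<notin> S0 \<longrightarrow> good (7,3)"
  unfolding good_def nb_7_3 by (simp add: hive_adj_iff A_adj_iff)
lemma nb_7_4: "nbrs_in hive_adj S0 (7,4) = {(2,4)}"
  unfolding nbrs_filter S0_def by (simp add: sf_T sf_F sf_E hive_adj_iff A_adj_iff)
lemma g_7_4: "(7,4) \<notin> S0 \<longrightarrow> good (7,4)"
  unfolding good_def nb_7_4 by (simp add: hive_adj_iff A_adj_iff)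
lemma nb_7_5: "nbrs_in hive_adj S0 (7,5) = {(2,5)}"
  unfolding nbrs_filter S0_def by (simp add: sf_T sf_F sf_E hive_adj_iff A_adj_iff)
lemma g_7_5: "(7,5) \<notin> S0 \<longrightarrow> good (7,5)"
  unfolding good_def nb_7_5 by (simp add: hive_adj_iff A_adj_iff)
lemma nb_7_6: "nbrs_in hive_adj S0 (7,6) = {(2,6)}"
  unfolding nbrs_filter S0_def by (simp add: sf_T sf_F sf_E hive_adj_iff A_adj_iff)
lemma g_7_6: "(7,6) \<notin> S0 \<longrightarrow> good (7,6)"
  unfolding good_def nb_7_6 by (simp add: hive_adj_iff A_adj_iff)
lemma nb_7_7: "nbrs_in hive_adj S0 (7,7) = {(7,2)}"
  unfolding nbrs_filter S0_def by (simp add: sf_T sf_F sf_E hive_adj_iff A_adj_iff)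
lemma g_7_7: "(7,7) \<notin> S0 \<longrightarrow> good (7,7)"
  unfolding good_def nb_7_7 by (simp add: hive_adj_iff A_adj_iff)
lemma nb_7_8: "nbrs_in hive_adj S0 (7,8) = {(7,2)}"
  unfolding nbrs_filter S0_def by (simp add: sf_T sf_F sf_E hive_adj_iff A_adj_iff)
lemma g_7_8: "(7,8) \<notin> S0 \<longrightarrow> good (7,8)"
  unfolding good_def nb_7_8 by (simp add: hive_adj_iff A_adj_iff)
lemma nb_8_0: "nbrs_in hive_adj S0 (8,0) = {(8,2)}"
  unfolding nbrs_filter S0_def by (simp add: sf_T sf_F sf_E hive_adj_iff A_adj_iff)
lemma g_8_0: "(8,0) \<notin> S0 \<longrightarrow> good (8,0)"
  unfolding good_def nb_8_0 by (simp add: hive_adj_iff A_adj_iff)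
lemma nb_8_1: "nbrs_in hive_adj S0 (8,1) = {(8,2)}"
  unfolding nbrs_filter S0_def by (simp add: sf_T sf_F sf_E hive_adj_iff A_adj_iff)
lemma g_8_1: "(8,1) \<notin> S0 \<longrightarrow> good (8,1)"
  unfolding good_def nb_8_1 by (simp add: hive_adj_iff A_adj_iff)
lemma g_8_2: "(8,2) \<notin> S0 \<longrightarrow> good (8,2)" by (simp add: S0_def)
lemma nb_8_3: "nbrs_in hive_adj S0 (8,3) = {(2,3)}"
  unfolding nbrs_filter S0_def by (simp add: sf_T sf_F sf_E hive_adj_iff A_adj_iff)
lemma g_8_3: "(8,3) \<notin> S0 \<longrightarrow> good (8,3)"
  unfolding good_def nb_8_3 by (simp add: hive_adj_iff A_adj_iff)
lemma nb_8_4: "nbrs_in hive_adj S0 (8,4) = {(2,4)}"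
  unfolding nbrs_filter S0_def by (simp add: sf_T sf_F sf_E hive_adj_iff A_adj_iff)
lemma g_8_4: "(8,4) \<notin> S0 \<longrightarrow> good (8,4)"
  unfolding good_def nb_8_4 by (simp add: hive_adj_iff A_adj_iff)
lemma nb_8_5: "nbrs_in hive_adj S0 (8,5) = {(2,5)}"
  unfolding nbrs_filter S0_def by (simp add: sf_T sf_F sf_E hive_adj_iff A_adj_iff)
lemma g_8_5: "(8,5) \<notin> S0 \<longrightarrow> good (8,5)"
  unfolding good_def nb_8_5 by (simp add: hive_adj_iff A_adj_iff)
lemma nb_8_6: "nbrs_in hive_adj S0 (8,6) = {(2,6)}"
  unfolding nbrs_filter S0_def by (simp add: sf_T sf_F sf_E hive_adj_iff A_adj_iff)
lemma g_8_6: "(8,6) \<notin> S0 \<longrightarrow> good (8,6)"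
  unfolding good_def nb_8_6 by (simp add: hive_adj_iff A_adj_iff)
lemma nb_8_7: "nbrs_in hive_adj S0 (8,7) = {(8,2)}"
  unfolding nbrs_filter S0_def by (simp add: sf_T sf_F sf_E hive_adj_iff A_adj_iff)
lemma g_8_7: "(8,7) \<notin> S0 \<longrightarrow> good (8,7)"
  unfolding good_def nb_8_7 by (simp add: hive_adj_iff A_adj_iff)
lemma nb_8_8: "nbrs_in hive_adj S0 (8,8) = {(8,2)}"
  unfolding nbrs_filter S0_def by (simp add: sf_T sf_F sf_E hive_adj_iff A_adj_iff)
lemma g_8_8: "(8,8) \<notin> S0 \<longrightarrow> good (8,8)"
  unfolding good_def nb_8_8 by (simp add: hive_adj_iff A_adj_iff)

lemma all_good: "\<forall>x\<in>hive_V. x \<notin> S0 \<longrightarrow> good x"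
  unfolding hive_V_def A_V_eq
  apply (simp only: ball_times ball_ins ball_emp)
  apply (intro conjI TrueI)
  apply (rule g_0_0 g_0_1 g_0_2 g_0_3 g_0_4 g_0_5 g_0_6 g_0_7 g_0_8 g_1_0 g_1_1 g_1_2 g_1_3 g_1_4 g_1_5 g_1_6 g_1_7 g_1_8 g_2_0 g_2_1 g_2_2 g_2_3 g_2_4 g_2_5 g_2_6 g_2_7 g_2_8 g_3_0 g_3_1 g_3_2 g_3_3 g_3_4 g_3_5 g_3_6 g_3_7 g_3_8 g_4_0 g_4_1 g_4_2 g_4_3 g_4_4 g_4_5 g_4_6 g_4_7 g_4_8 g_5_0 g_5_1 g_5_2 g_5_3 g_5_4 g_5_5 g_5_6 g_5_7 g_5_8 g_6_0 g_6_1 g_6_2 g_6_3 g_6_4 g_6_5 g_6_6 g_6_7 g_6_8 g_7_0 g_7_1 g_7_2 g_7_3 g_7_4 g_7_5 g_7_6 g_7_7 g_7_8 g_8_0 g_8_1 g_8_2 g_8_3 g_8_4 g_8_5 g_8_6 g_8_7 g_8_8)+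
  done

lemma npd: "nonisolated_perfect_dominating hive_V hive_adj S0"
proof -
  have 1: "S0 \<subseteq> hive_V" unfolding S0_def hive_V_def A_V_def by auto
  have 2: "\<forall>x\<in>S0. \<exists>y\<in>S0. hive_adj x y"
    unfolding S0_def by (simp add: hive_adj_iff A_adj_iff)
  have 3: "\<forall>x\<in>hive_V - S0. card (nbrs_in hive_adj S0 x) = 1 \<or>
        (card (nbrs_in hive_adj S0 x) = 2 \<and> (\<exists>a b. nbrs_in hive_adj S0 x = {a, b} \<and> hive_adj a b))"
  proof
    fix x assume "x \<in> hive_V - S0"
    then have "good x" using all_good by blast
    then show "card (nbrs_in hive_adj S0 x) = 1 \<or>
        (card (nbrs_in hive_adj S0 x) = 2 \<and> (\<exists>a b. nbrs_in hive_adj S0 x = {a, b} \<and> hive_adj a b))"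
      unfolding good_def by (rule card2_help)
  qed
  show ?thesis unfolding nonisolated_perfect_dominating_def
    using 1 2 3 by (intro conjI)
qed

lemma comp_D1: "\<forall>x\<in>D1. {y \<in> S0. reach_in hive_adj S0 x y} = D1"
proof -
  have r_0_7: "reach_in hive_adj S0 (0,7) (0,7)" by (rule reach_refl)
  have r_0_8: "reach_in hive_adj S0 (0,7) (0,8)" by (rule reach_step2[OF r_0_7]) (simp_all add: S0_def hive_adj_iff A_adj_iff)
  have R: "\<forall>y\<in>D1. reach_in hive_adj S0 (0,7) y" unfolding D1_def using r_0_7 r_0_8 by simp
  have cl: "\<forall>u\<in>D1. \<forall>v\<in>S0. hive_adj u v \<longrightarrow> v \<in> D1"
    unfolding D1_def S0_def by (simp add: hive_adj_iff A_adj_iff)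
  have sub: "D1 \<subseteq> S0" unfolding D1_def S0_def by simp
  have h: "(0,7) \<in> D1" unfolding D1_def by simp
  show ?thesis using comp_lemma[OF h sub cl R hive_sym] by blast
qed

lemma comp_D2: "\<forall>x\<in>D2. {y \<in> S0. reach_in hive_adj S0 x y} = D2"
proof -
  have r_5_2: "reach_in hive_adj S0 (5,2) (5,2)" by (rule reach_refl)
  have r_6_2: "reach_in hive_adj S0 (5,2) (6,2)" by (rule reach_step2[OF r_5_2]) (simp_all add: S0_def hive_adj_iff A_adj_iff)
  have R: "\<forall>y\<in>D2. reach_in hive_adj S0 (5,2) y" unfolding D2_def using r_5_2 r_6_2 by simp
  have cl: "\<forall>u\<in>D2. \<forall>v\<in>S0. hive_adj u v \<longrightarrow> v \<in> D2"
    unfolding D2_def S0_def by (simp add: hive_adj_iff A_adj_iff)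
  have sub: "D2 \<subseteq> S0" unfolding D2_def S0_def by simp
  have h: "(5,2) \<in> D2" unfolding D2_def by simp
  show ?thesis using comp_lemma[OF h sub cl R hive_sym] by blast
qed

lemma comp_D3: "\<forall>x\<in>D3. {y \<in> S0. reach_in hive_adj S0 x y} = D3"
proof -
  have r_3_1: "reach_in hive_adj S0 (3,1) (3,1)" by (rule reach_refl)
  have r_4_1: "reach_in hive_adj S0 (3,1) (4,1)" by (rule reach_step2[OF r_3_1]) (simp_all add: S0_def hive_adj_iff A_adj_iff)
  have R: "\<forall>y\<in>D3. reach_in hive_adj S0 (3,1) y" unfolding D3_def using r_3_1 r_4_1 by simp
  have cl: "\<forall>u\<in>D3. \<forall>v\<in>S0. hive_adj u v \<longrightarrow> v \<in> D3"
    unfolding D3_def S0_def by (simp add: hive_adj_iff A_adj_iff)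
  have sub: "D3 \<subseteq> S0" unfolding D3_def S0_def by simp
  have h: "(3,1) \<in> D3" unfolding D3_def by simp
  show ?thesis using comp_lemma[OF h sub cl R hive_sym] by blast
qed

lemma comp_D4: "\<forall>x\<in>D4. {y \<in> S0. reach_in hive_adj S0 x y} = D4"
proof -
  have r_7_2: "reach_in hive_adj S0 (7,2) (7,2)" by (rule reach_refl)
  have r_8_2: "reach_in hive_adj S0 (7,2) (8,2)" by (rule reach_step2[OF r_7_2]) (simp_all add: S0_def hive_adj_iff A_adj_iff)
  have R: "\<forall>y\<in>D4. reach_in hive_adj S0 (7,2) y" unfolding D4_def using r_7_2 r_8_2 by simp
  have cl: "\<forall>u\<in>D4. \<forall>v\<in>S0. hive_adj u v \<longrightarrow> v \<in> D4"
    unfolding D4_def S0_def by (simp add: hive_adj_iff A_adj_iff)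
  have sub: "D4 \<subseteq> S0" unfolding D4_def S0_def by simp
  have h: "(7,2) \<in> D4" unfolding D4_def by simp
  show ?thesis using comp_lemma[OF h sub cl R hive_sym] by blast
qed

lemma comp_D5: "\<forall>x\<in>D5. {y \<in> S0. reach_in hive_adj S0 x y} = D5"
proof -
  have r_1_5: "reach_in hive_adj S0 (1,5) (1,5)" by (rule reach_refl)
  have r_1_6: "reach_in hive_adj S0 (1,5) (1,6)" by (rule reach_step2[OF r_1_5]) (simp_all add: S0_def hive_adj_iff A_adj_iff)
  have r_2_5: "reach_in hive_adj S0 (1,5) (2,5)" by (rule reach_step2[OF r_1_5]) (simp_all add: S0_def hive_adj_iff A_adj_iff)
  have r_2_6: "reach_in hive_adj S0 (1,5) (2,6)" by (rule reach_step2[OF r_1_6]) (simp_all add: S0_def hive_adj_iff A_adj_iff)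
  have R: "\<forall>y\<in>D5. reach_in hive_adj S0 (1,5) y" unfolding D5_def using r_1_5 r_1_6 r_2_5 r_2_6 by simp
  have cl: "\<forall>u\<in>D5. \<forall>v\<in>S0. hive_adj u v \<longrightarrow> v \<in> D5"
    unfolding D5_def S0_def by (simp add: hive_adj_iff A_adj_iff)
  have sub: "D5 \<subseteq> S0" unfolding D5_def S0_def by simp
  have h: "(1,5) \<in> D5" unfolding D5_def by simp
  show ?thesis using comp_lemma[OF h sub cl R hive_sym] by blast
qed

lemma comp_D6: "\<forall>x\<in>D6. {y \<in> S0. reach_in hive_adj S0 x y} = D6"
proof -
  have r_0_3: "reach_in hive_adj S0 (0,3) (0,3)" by (rule reach_refl)
  have r_0_4: "reach_in hive_adj S0 (0,3) (0,4)" by (rule reach_step2[OF r_0_3]) (simp_all add: S0_def hive_adj_iff A_adj_iff)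
  have r_1_3: "reach_in hive_adj S0 (0,3) (1,3)" by (rule reach_step2[OF r_0_3]) (simp_all add: S0_def hive_adj_iff A_adj_iff)
  have r_2_3: "reach_in hive_adj S0 (0,3) (2,3)" by (rule reach_step2[OF r_0_3]) (simp_all add: S0_def hive_adj_iff A_adj_iff)
  have r_1_4: "reach_in hive_adj S0 (0,3) (1,4)" by (rule reach_step2[OF r_0_4]) (simp_all add: S0_def hive_adj_iff A_adj_iff)
  have r_2_4: "reach_in hive_adj S0 (0,3) (2,4)" by (rule reach_step2[OF r_0_4]) (simp_all add: S0_def hive_adj_iff A_adj_iff)
  have R: "\<forall>y\<in>D6. reach_in hive_adj S0 (0,3) y" unfolding D6_def using r_0_3 r_0_4 r_1_3 r_2_3 r_1_4 r_2_4 by simp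
  have cl: "\<forall>u\<in>D6. \<forall>v\<in>S0. hive_adj u v \<longrightarrow> v \<in> D6"
    unfolding D6_def S0_def by (simp add: hive_adj_iff A_adj_iff)
  have sub: "D6 \<subseteq> S0" unfolding D6_def S0_def by simp
  have h: "(0,3) \<in> D6" unfolding D6_def by simp
  show ?thesis using comp_lemma[OF h sub cl R hive_sym] by blast
qed


lemma image_const: "C \<noteq> {} \<Longrightarrow> \<forall>x\<in>C. f x = C \<Longrightarrow> f ` C = {C}"
  by auto

lemma comps: "components_of hive_adj S0 = {D1, D2, D3, D4, D5, D6}"
proof -
  let ?f = "\<lambda>x. {y \<in> S0. reach_in hive_adj S0 x y}"
  have "components_of hive_adj S0 = ?f ` D1 \<union> ?f ` D2 \<union> ?f ` D3 \<union> ?f ` D4 \<union> ?f ` D5 \<union> ?f ` D6"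
    unfolding components_of_def S0_union by (simp only: image_Un)
  also have "\<dots> = {D1} \<union> {D2} \<union> {D3} \<union> {D4} \<union> {D5} \<union> {D6}"
    using image_const[OF _ comp_D1] image_const[OF _ comp_D2] image_const[OF _ comp_D3]
      image_const[OF _ comp_D4] image_const[OF _ comp_D5] image_const[OF _ comp_D6]
    unfolding D1_def D2_def D3_def D4_def D5_def D6_def by simp
  finally show ?thesis by auto
qed

lemma iso1: "graph_iso D1 hive_adj (K_V 2) K_adj"
  unfolding graph_iso_def
  apply (rule exI[of _ "\<lambda>(a,b). b - 7"])
  unfolding D1_def K2 bij_betw_def
  by (simp add: hive_adj_iff A_adj_iff K_adj_def)

lemma iso2: "graph_iso D2 hive_adj (K_V 2) K_adj"
  unfolding graph_iso_def
  apply (rule exI[of _ "\<lambda>(a,b). a - 5"])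
  unfolding D2_def K2 bij_betw_def
  by (simp add: hive_adj_iff A_adj_iff K_adj_def)

lemma iso3: "graph_iso D3 hive_adj (K_V 2) K_adj"
  unfolding graph_iso_def
  apply (rule exI[of _ "\<lambda>(a,b). a - 3"])
  unfolding D3_def K2 bij_betw_def
  by (simp add: hive_adj_iff A_adj_iff K_adj_def)

lemma iso4: "graph_iso D4 hive_adj (K_V 2) K_adj"
  unfolding graph_iso_def
  apply (rule exI[of _ "\<lambda>(a,b). a - 7"])
  unfolding D4_def K2 bij_betw_def
  by (simp add: hive_adj_iff A_adj_iff K_adj_def)

lemma iso5: "graph_iso D5 hive_adj (K_V 2 \<times> K_V 2) (cart_prod_adj K_adj K_adj)"
  unfolding graph_iso_def
  apply (rule exI[of _ "\<lambda>(a,b). (a - 1, b - 5)"])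
  unfolding D5_def K2 bij_betw_def
  by (simp add: hive_adj_iff A_adj_iff K_adj_def cart_prod_adj_def insert_commute)

lemma iso6: "graph_iso D6 hive_adj (K_V 3 \<times> K_V 2) (cart_prod_adj K_adj K_adj)"
  unfolding graph_iso_def
  apply (rule exI[of _ "\<lambda>(a,b). (a, b - 3)"])
  unfolding D6_def K2 K3 bij_betw_def
  by (simp add: hive_adj_iff A_adj_iff K_adj_def cart_prod_adj_def insert_commute)

lemma neqI: "a \<in> A \<Longrightarrow> a \<notin> B \<Longrightarrow> A \<noteq> B"
  by auto

lemma dist: "distinct [D1, D2, D3, D4, D5, D6]"
proof -
  have n_1_2: "D1 \<noteq> D2" by (rule neqI[of "(0,7)"]) (simp_all add: D1_def D2_def)
  have n_1_3: "D1 \<noteq> D3" by (rule neqI[of "(0,7)"]) (simp_all add: D1_def D3_def)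
  have n_1_4: "D1 \<noteq> D4" by (rule neqI[of "(0,7)"]) (simp_all add: D1_def D4_def)
  have n_1_5: "D1 \<noteq> D5" by (rule neqI[of "(0,7)"]) (simp_all add: D1_def D5_def)
  have n_1_6: "D1 \<noteq> D6" by (rule neqI[of "(0,7)"]) (simp_all add: D1_def D6_def)
  have n_2_3: "D2 \<noteq> D3" by (rule neqI[of "(5,2)"]) (simp_all add: D2_def D3_def)
  have n_2_4: "D2 \<noteq> D4" by (rule neqI[of "(5,2)"]) (simp_all add: D2_def D4_def)
  have n_2_5: "D2 \<noteq> D5" by (rule neqI[of "(5,2)"]) (simp_all add: D2_def D5_def)
  have n_2_6: "D2 \<noteq> D6" by (rule neqI[of "(5,2)"]) (simp_all add: D2_def D6_def)
  have n_3_4: "D3 \<noteq> D4" by (rule neqI[of "(3,1)"]) (simp_all add: D3_def D4_def)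
  have n_3_5: "D3 \<noteq> D5" by (rule neqI[of "(3,1)"]) (simp_all add: D3_def D5_def)
  have n_3_6: "D3 \<noteq> D6" by (rule neqI[of "(3,1)"]) (simp_all add: D3_def D6_def)
  have n_4_5: "D4 \<noteq> D5" by (rule neqI[of "(7,2)"]) (simp_all add: D4_def D5_def)
  have n_4_6: "D4 \<noteq> D6" by (rule neqI[of "(7,2)"]) (simp_all add: D4_def D6_def)
  have n_5_6: "D5 \<noteq> D6" by (rule neqI[of "(1,5)"]) (simp_all add: D5_def D6_def)
  show ?thesis using n_1_2 n_1_3 n_1_4 n_1_5 n_1_6 n_2_3 n_2_4 n_2_5 n_2_6 n_3_4 n_3_5 n_3_6 n_4_5 n_4_6 n_5_6 by simp
qed


theorem theorem4p1:
  shows "\<exists>S. nonisolated_perfect_dominating hive_V hive_adj S \<and>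
     (\<exists>C1 C2 C3 C4 C5 C6.
        components_of hive_adj S = {C1, C2, C3, C4, C5, C6} \<and>
        distinct [C1, C2, C3, C4, C5, C6] \<and>
        graph_iso C1 hive_adj (K_V 2) K_adj \<and>
        graph_iso C2 hive_adj (K_V 2) K_adj \<and>
        graph_iso C3 hive_adj (K_V 2) K_adj \<and>
        graph_iso C4 hive_adj (K_V 2) K_adj \<and>
        graph_iso C5 hive_adj (K_V 2 \<times> K_V 2) (cart_prod_adj K_adj K_adj) \<and>
        graph_iso C6 hive_adj (K_V 3 \<times> K_V 2) (cart_prod_adj K_adj K_adj))"
  by (rule exI[of _ S0], rule conjI[OF npd], rule exI[of _ D1], rule exI[of _ D2], rule exI[of _ D3],
    rule exI[of _ D4], rule exI[of _ D5], rule exI[of _ D6],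
    intro conjI comps dist iso1 iso2 iso3 iso4 iso5 iso6)

end
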